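(* Let $(X,r)$ be a non-degenerate symmetric set (not necessarily finite) whose YB monoid $S(X,r)$ embeds in $G=G(X,r)$. The following are equivalent: (1) the associated left brace $(G,+,\cdot)$ is a two-sided brace; (2) the associated symmetric group $(G,r_G)$ is square-free (i.e. ${}^aa=a$ for all $a\in G$); (3) $(X,r)$ is square-free and ${}^{xy}(xy)=xy$ for all $x,y\in G$; (4) the group $G(X,r)$ is the free abelian group on $X$, so $(G,r_G)$ is the trivial solution; (5) $(X,r)$ is the trivial solution, i.e. $r(x,y)=(y,x)$ for all $x,y\in X$.
   Context: A symmetric set is a pair $(X,r)$, $X$ nonempty, $r(x,y)=({}^xy,x^y)$ a non-degenerate (all $y\mapsto{}^xy$, $y\mapsto y^x$ bijective), involutive bijection of $X\times X$ satisfying $r^{12}r^{23}r^{12}=r^{23}r^{12}r^{23}$ on $X^3$; square-free if $r(x,x)=(x,x)$ for all $x$. $S(X,r)$ (resp. $G(X,r)$) is the monoid (resp. group) generated by $X$ with relations $xy=zt$ whenever $r(x,y)=(z,t)\neq(x,y)$. A symmetric group is $(G,\sigma)$, $\sigma(u,v)=({}^uv,u^v)$ an involutive bijection of $G\times G$ with ${}^a1=1,{}^1u=u,1^u=1,a^1=a$, ${}^{ab}u={}^a({}^bu)$, $a^{uv}=(a^u)^v$, ${}^a(uv)=({}^au)({}^{a^u}v)$, $(ab)^u=(a^{{}^bu})(b^u)$, $uv=({}^uv)(u^v)$; $(G,r_G)$ is $G(X,r)$ with the unique such braiding restricting to $r$ on $X\times X$. Its left brace is $(G,+,\cdot)$ with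 $a+b:=a({}^{a^{-1}}b)$. A left brace $(B,+,\cdot)$ (abelian group $(B,+)$, group $(B,\cdot)$, $a(b+c)+a=ab+ac$) is two-sided if additionally $(a+b)c+c=ac+bc$ for all $a,b,c$. *)

theory Defs
  imports "HOL-Algebra.Free_Abelian_Groups"
begin

text \<open>X is the type 'a (nonempty by construction); r : X x X -> X x X,
  r(x,y) = (lact x y, ract x y) with lact x y = {}^x y and ract x y = x^y.\<close>

definition lact :: "('a \<times> 'a \<Rightarrow> 'a \<times> 'a) \<Rightarrow> 'a \<Rightarrow> 'a \<Rightarrow> 'a"
  where "lact r x y = fst (r (x, y))"

definition ract :: "('a \<times> 'a \<Rightarrow> 'a \<times> 'a) \<Rightarrow> 'a \<Rightarrow> 'a \<Rightarrow> 'a"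
  where "ract r x y = snd (r (x, y))"

definition r12 :: "('a \<times> 'a \<Rightarrow> 'a \<times> 'a) \<Rightarrow> 'a \<times> 'a \<times> 'a \<Rightarrow> 'a \<times> 'a \<times> 'a"
  where "r12 r t = (case t of (x, y, z) \<Rightarrow> (case r (x, y) of (u, v) \<Rightarrow> (u, v, z)))"

definition r23 :: "('a \<times> 'a \<Rightarrow> 'a \<times> 'a) \<Rightarrow> 'a \<times> 'a \<times> 'a \<Rightarrow> 'a \<times> 'a \<times> 'a"
  where "r23 r t = (case t of (x, y, z) \<Rightarrow> (case r (y, z) of (u, v) \<Rightarrow> (x, u, v)))"

definition symmetric_set :: "('a \<times> 'a \<Rightarrow> 'a \<times> 'a) \<Rightarrow> bool" where
  "symmetric_set r \<longleftrightarrow>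
     (\<forall>x. bij (lact r x)) \<and> (\<forall>x. bij (\<lambda>y. ract r y x)) \<and>
     (\<forall>p. r (r p) = p) \<and>
     (\<forall>t. r12 r (r23 r (r12 r t)) = r23 r (r12 r (r23 r t)))"

definition square_free :: "('a \<times> 'a \<Rightarrow> 'a \<times> 'a) \<Rightarrow> bool" where
  "square_free r \<longleftrightarrow> (\<forall>x. r (x, x) = (x, x))"

definition trivial_solution :: "('a \<times> 'a \<Rightarrow> 'a \<times> 'a) \<Rightarrow> bool" where
  "trivial_solution r \<longleftrightarrow> (\<forall>x y. r (x, y) = (y, x))"

text \<open>S(X,r): words over X modulo the congruence generated by xy = zt whenever
  r(x,y) = (z,t). (Including the trivial case r(x,y) = (x,y) changes nothing.)\<close>

definition S_step :: "('a \<times> 'a \<Rightarrow> 'a \<times> 'a) \<Rightarrow> ('a list \<times> 'a list) set" where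
  "S_step r = {(u @ [x, y] @ v, u @ [fst (r (x, y)), snd (r (x, y))] @ v) | u v x y. True}"

definition S_eq :: "('a \<times> 'a \<Rightarrow> 'a \<times> 'a) \<Rightarrow> ('a list \<times> 'a list) set" where
  "S_eq r = (S_step r \<union> (S_step r)\<inverse>)\<^sup>*"

text \<open>G(X,r): words in letters x^{+1} = (x,True), x^{-1} = (x,False), modulo the
  congruence generated by free cancellation and the relations xy = zt.\<close>

definition G_step :: "('a \<times> 'a \<Rightarrow> 'a \<times> 'a) \<Rightarrow> (('a \<times> bool) list \<times> ('a \<times> bool) list) set" where
  "G_step r =
     {(u @ [(x, b), (x, \<not> b)] @ v, u @ v) | u v x b. True} \<union>
     {(u @ [(x, True), (y, True)] @ v,
       u @ [(fst (r (x, y)), True), (snd (r (x, y)), True)] @ v) | u v x y. True}"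

definition G_eq :: "('a \<times> 'a \<Rightarrow> 'a \<times> 'a) \<Rightarrow> (('a \<times> bool) list \<times> ('a \<times> bool) list) set" where
  "G_eq r = (G_step r \<union> (G_step r)\<inverse>)\<^sup>*"

definition YB_group :: "('a \<times> 'a \<Rightarrow> 'a \<times> 'a) \<Rightarrow> (('a \<times> bool) list set) monoid" where
  "YB_group r =
     \<lparr> carrier = UNIV // G_eq r,
       monoid.mult = (\<lambda>A B. G_eq r `` {(SOME u. u \<in> A) @ (SOME v. v \<in> B)}),
       one = G_eq r `` {[]} \<rparr>"

definition gen :: "('a \<times> 'a \<Rightarrow> 'a \<times> 'a) \<Rightarrow> 'a \<Rightarrow> ('a \<times> bool) list set" where
  "gen r x = G_eq r `` {[(x, True)]}"

definition S_embeds_in_G :: "('a \<times> 'a \<Rightarrow> 'a \<times> 'a) \<Rightarrow> bool" where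
  "S_embeds_in_G r \<longleftrightarrow>
     (\<forall>u v. (map (\<lambda>x. (x, True)) u, map (\<lambda>x. (x, True)) v) \<in> G_eq r \<longrightarrow> (u, v) \<in> S_eq r)"

definition glact :: "('g \<times> 'g \<Rightarrow> 'g \<times> 'g) \<Rightarrow> 'g \<Rightarrow> 'g \<Rightarrow> 'g"
  where "glact \<sigma> a u = fst (\<sigma> (a, u))"

definition gract :: "('g \<times> 'g \<Rightarrow> 'g \<times> 'g) \<Rightarrow> 'g \<Rightarrow> 'g \<Rightarrow> 'g"
  where "gract \<sigma> a u = snd (\<sigma> (a, u))"

definition symmetric_group :: "('g, 'm) monoid_scheme \<Rightarrow> ('g \<times> 'g \<Rightarrow> 'g \<times> 'g) \<Rightarrow> bool" where
  "symmetric_group G \<sigma> \<longleftrightarrow> group G \<and>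
     (\<forall>p \<in> carrier G \<times> carrier G. \<sigma> p \<in> carrier G \<times> carrier G \<and> \<sigma> (\<sigma> p) = p) \<and>
     (\<forall>a \<in> carrier G. glact \<sigma> a \<one>\<^bsub>G\<^esub> = \<one>\<^bsub>G\<^esub> \<and> glact \<sigma> \<one>\<^bsub>G\<^esub> a = a \<and>
                      gract \<sigma> \<one>\<^bsub>G\<^esub> a = \<one>\<^bsub>G\<^esub> \<and> gract \<sigma> a \<one>\<^bsub>G\<^esub> = a) \<and>
     (\<forall>a \<in> carrier G. \<forall>b \<in> carrier G. \<forall>u \<in> carrier G.
        glact \<sigma> (a \<otimes>\<^bsub>G\<^esub> b) u = glact \<sigma> a (glact \<sigma> b u) \<and>
        gract \<sigma> u (a \<otimes>\<^bsub>G\<^esub> b) = gract \<sigma> (gract \<sigma> u a) b) \<and>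
     (\<forall>a \<in> carrier G. \<forall>u \<in> carrier G. \<forall>v \<in> carrier G.
        glact \<sigma> a (u \<otimes>\<^bsub>G\<^esub> v) = glact \<sigma> a u \<otimes>\<^bsub>G\<^esub> glact \<sigma> (gract \<sigma> a u) v) \<and>
     (\<forall>a \<in> carrier G. \<forall>b \<in> carrier G. \<forall>u \<in> carrier G.
        gract \<sigma> (a \<otimes>\<^bsub>G\<^esub> b) u = gract \<sigma> a (glact \<sigma> b u) \<otimes>\<^bsub>G\<^esub> gract \<sigma> b u) \<and>
     (\<forall>u \<in> carrier G. \<forall>v \<in> carrier G.
        u \<otimes>\<^bsub>G\<^esub> v = glact \<sigma> u v \<otimes>\<^bsub>G\<^esub> gract \<sigma> u v)"

definition brace_add :: "('g, 'm) monoid_scheme \<Rightarrow> ('g \<times> 'g \<Rightarrow> 'g \<times> 'g) \<Rightarrow> 'g \<Rightarrow> 'g \<Rightarrow> 'g" where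
  "brace_add G \<sigma> a b = a \<otimes>\<^bsub>G\<^esub> glact \<sigma> (inv\<^bsub>G\<^esub> a) b"

definition left_brace :: "('g, 'm) monoid_scheme \<Rightarrow> ('g \<Rightarrow> 'g \<Rightarrow> 'g) \<Rightarrow> bool" where
  "left_brace G add \<longleftrightarrow> group G \<and>
     (\<exists>z. comm_group \<lparr>carrier = carrier G, monoid.mult = add, one = z\<rparr>) \<and>
     (\<forall>a \<in> carrier G. \<forall>b \<in> carrier G. \<forall>c \<in> carrier G.
        add (a \<otimes>\<^bsub>G\<^esub> add b c) a = add (a \<otimes>\<^bsub>G\<^esub> b) (a \<otimes>\<^bsub>G\<^esub> c))"

definition two_sided_brace :: "('g, 'm) monoid_scheme \<Rightarrow> ('g \<Rightarrow> 'g \<Rightarrow> 'g) \<Rightarrow> bool" where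
  "two_sided_brace G add \<longleftrightarrow> left_brace G add \<and>
     (\<forall>a \<in> carrier G. \<forall>b \<in> carrier G. \<forall>c \<in> carrier G.
        add (add a b \<otimes>\<^bsub>G\<^esub> c) c = add (a \<otimes>\<^bsub>G\<^esub> c) (b \<otimes>\<^bsub>G\<^esub> c))"

end

theory Submission
  imports Defs
begin


abbreviation cls where "cls r w \<equiv> G_eq r `` {w}"

lemma G_eq_equiv: "equiv UNIV (G_eq r)"
  unfolding equiv_def G_eq_def
  by (auto simp: refl_rtrancl sym_rtrancl sym_Un_converse trans_rtrancl)

lemma G_step_ctx: "(a,b) \<in> G_step r \<Longrightarrow> (p@a@q, p@b@q) \<in> G_step r"
proof (unfold G_step_def, elim UnE CollectE exE conjE, goal_cases)
  case (1 u v x c)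
  then show ?case by (intro UnI1 CollectI exI[of _ "p@u"] exI[of _ "v@q"] exI[of _ x] exI[of _ c]) auto
next
  case (2 u v x y)
  then show ?case by (intro UnI2 CollectI exI[of _ "p@u"] exI[of _ "v@q"] exI[of _ x] exI[of _ y]) auto
qed

lemma G_eq_ctx: "(a,b) \<in> G_eq r \<Longrightarrow> (p@a@q, p@b@q) \<in> G_eq r"
  unfolding G_eq_def
proof (induction rule: rtrancl_induct)
  case base then show ?case by simp
next
  case (step y z)
  then have "(p@y@q, p@z@q) \<in> G_step r \<union> (G_step r)\<inverse>" using G_step_ctx by blast
  then show ?case using step(3) by (meson rtrancl.rtrancl_into_rtrancl)
qed

lemma G_eq_app: "(a,b) \<in> G_eq r \<Longrightarrow> (c,d) \<in> G_eq r \<Longrightarrow> (a@c, b@d) \<in> G_eq r"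
proof -
  assume 1: "(a,b) \<in> G_eq r" and 2: "(c,d) \<in> G_eq r"
  have "([]@a@c, []@b@c) \<in> G_eq r" by (rule G_eq_ctx[OF 1])
  moreover have "(b@c@[], b@d@[]) \<in> G_eq r" by (rule G_eq_ctx[OF 2])
  ultimately show ?thesis using G_eq_equiv[of r] unfolding equiv_def trans_def by auto
qed

lemma cls_eq_iff: "cls r u = cls r v \<longleftrightarrow> (u,v) \<in> G_eq r"
  using eq_equiv_class_iff[OF G_eq_equiv] by blast

lemma carrier_G: "carrier (YB_group r) = range (cls r)"
  by (auto simp: YB_group_def quotient_def)

lemma one_G: "\<one>\<^bsub>YB_group r\<^esub> = cls r []"
  by (simp add: YB_group_def)

lemma mult_G: "cls r u \<otimes>\<^bsub>YB_group r\<^esub> cls r v = cls r (u@v)"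
proof -
  have m: "x \<in> cls r x" for x by (simp add: G_eq_def)
  define u0 where "u0 = (SOME w. w \<in> cls r u)"
  define v0 where "v0 = (SOME w. w \<in> cls r v)"
  have "u0 \<in> cls r u" unfolding u0_def by (rule someI, rule m)
  moreover have "v0 \<in> cls r v" unfolding v0_def by (rule someI, rule m)
  ultimately have "(u@v, u0@v0) \<in> G_eq r" using G_eq_app by blast
  then have e: "cls r (u0@v0) = cls r (u@v)" using G_eq_equiv[of r] by (simp add: cls_eq_iff equiv_def sym_def)
  show ?thesis unfolding YB_group_def monoid.select_convs u0_def[symmetric] v0_def[symmetric]
    by (rule e)
qed

lemma gen_cls: "gen r x = cls r [(x,True)]" by (simp add: gen_def)


lemma S_step_len: "(w,w') \<in> S_step r \<Longrightarrow> length w' = length w \<and> length w \<ge> 2"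
  by (auto simp: S_step_def)

lemma S_eq1: "([x],w) \<in> S_eq r \<Longrightarrow> w = [x]"
  unfolding S_eq_def
proof (induction rule: rtrancl_induct)
  case (step y z) then show ?case using S_step_len[of y z r] S_step_len[of z y r] by auto
qed simp

definition rw :: "('a \<times> 'a \<Rightarrow> 'a \<times> 'a) \<Rightarrow> 'a list \<Rightarrow> 'a list" where
  "rw r w = (case w of [a,b] \<Rightarrow> [fst (r (a,b)), snd (r (a,b))] | _ \<Rightarrow> w)"

lemma S_step2: "(w,w') \<in> S_step r \<Longrightarrow> length w = 2 \<Longrightarrow> w' = rw r w"
  by (auto simp: S_step_def rw_def)

lemma rw_invol: "\<forall>p. r (r p) = p \<Longrightarrow> length w = 2 \<Longrightarrow> rw r (rw r w) = w"
proof -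
  assume inv: "\<forall>p. r (r p) = p" and "length w = 2"
  then obtain a b where w: "w = [a,b]" by (metis (no_types) One_nat_def Suc_1 length_0_conv length_Suc_conv)
  have "r (fst (r (a,b)), snd (r (a,b))) = (a,b)" using inv by simp
  then show ?thesis unfolding w rw_def by simp
qed

lemma S_eq2: assumes inv: "\<forall>p. r (r p) = p" and "([x,y],w) \<in> S_eq r"
  shows "w = [x,y] \<or> w = rw r [x,y]"
  using assms(2) unfolding S_eq_def
proof (induction rule: rtrancl_induct)
  case base then show ?case by simp
next
  case (step y' z)
  have l: "length y' = 2" using step(3) by (auto simp: rw_def split: prod.splits)
  have "length (rw r [x,y]) = 2" by (simp add: rw_def)
  from step(2) show ?case
  proof
    assume "(y',z) \<in> S_step r"
    then have "z = rw r y'" using S_step2 l by blast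
    then show ?thesis using step(3) rw_invol[OF inv, of "[x,y]"] by auto
  next
    assume "(y',z) \<in> (S_step r)\<inverse>"
    then have "(z,y') \<in> S_step r" by simp
    then have "y' = rw r z" using S_step2 S_step_len l by metis
    then have "z = rw r y'" using rw_invol[OF inv] S_step_len \<open>(z,y') \<in> S_step r\<close> l by metis
    then show ?thesis using step(3) rw_invol[OF inv, of "[x,y]"] by auto
  qed
qed




locale YB =
  fixes r :: "'a \<times> 'a \<Rightarrow> 'a \<times> 'a"
    and \<sigma> :: "('a \<times> bool) list set \<times> ('a \<times> bool) list set \<Rightarrow> ('a \<times> bool) list set \<times> ('a \<times> bool) list set"
  assumes symm: "symmetric_set r"
    and emb: "S_embeds_in_G r"
    and rG: "symmetric_group (YB_group r) \<sigma>"
    and rG_ext: "\<forall>x y. \<sigma> (gen r x, gen r y) = (gen r (fst (r (x, y))), gen r (snd (r (x, y))))"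
begin

abbreviation GG where "GG \<equiv> YB_group r"

sublocale grp: group GG using rG by (simp add: symmetric_group_def)

lemma invol: "r (r p) = p" using symm unfolding symmetric_set_def by (cases p) simp
lemma lbij: "bij (lact r x)" using symm by (simp add: symmetric_set_def)
lemma linj: "lact r x a = lact r x b \<Longrightarrow> a = b" using lbij[of x] by (simp add: bij_def inj_eq)
lemma r_split: "r (x,y) = (lact r x y, ract r x y)" by (simp add: lact_def ract_def)

lemma sg_car: "\<forall>p \<in> carrier GG \<times> carrier GG. \<sigma> p \<in> carrier GG \<times> carrier GG \<and> \<sigma> (\<sigma> p) = p"
  using rG unfolding symmetric_group_def by (elim conjE) assumption
lemma sg_one: "\<forall>a \<in> carrier GG. glact \<sigma> a \<one>\<^bsub>GG\<^esub> = \<one>\<^bsub>GG\<^esub> \<and> glact \<sigma> \<one>\<^bsub>GG\<^esub> a = a \<and>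
                      gract \<sigma> \<one>\<^bsub>GG\<^esub> a = \<one>\<^bsub>GG\<^esub> \<and> gract \<sigma> a \<one>\<^bsub>GG\<^esub> = a"
  using rG unfolding symmetric_group_def by (elim conjE) assumption
lemma sg_act: "\<forall>a \<in> carrier GG. \<forall>b \<in> carrier GG. \<forall>u \<in> carrier GG.
        glact \<sigma> (a \<otimes>\<^bsub>GG\<^esub> b) u = glact \<sigma> a (glact \<sigma> b u) \<and>
        gract \<sigma> u (a \<otimes>\<^bsub>GG\<^esub> b) = gract \<sigma> (gract \<sigma> u a) b"
  using rG unfolding symmetric_group_def by (elim conjE) assumption
lemma sg_prod: "\<forall>a \<in> carrier GG. \<forall>u \<in> carrier GG. \<forall>v \<in> carrier GG.
        glact \<sigma> a (u \<otimes>\<^bsub>GG\<^esub> v) = glact \<sigma> a u \<otimes>\<^bsub>GG\<^esub> glact \<sigma> (gract \<sigma> a u) v"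
  using rG unfolding symmetric_group_def by (elim conjE) assumption
lemma sg_dec: "\<forall>u \<in> carrier GG. \<forall>v \<in> carrier GG.
        u \<otimes>\<^bsub>GG\<^esub> v = glact \<sigma> u v \<otimes>\<^bsub>GG\<^esub> gract \<sigma> u v"
  using rG unfolding symmetric_group_def by (elim conjE) assumption

lemma sig_car: "a \<in> carrier GG \<Longrightarrow> u \<in> carrier GG \<Longrightarrow> glact \<sigma> a u \<in> carrier GG \<and> gract \<sigma> a u \<in> carrier GG"
proof -
  assume "a \<in> carrier GG" "u \<in> carrier GG"
  then have "\<sigma> (a,u) \<in> carrier GG \<times> carrier GG" using sg_car by blast
  then show ?thesis unfolding glact_def gract_def by (simp add: mem_Times_iff)
qed
lemma gl_car[simp]: "a \<in> carrier GG \<Longrightarrow> u \<in> carrier GG \<Longrightarrow> glact \<sigma> a u \<in> carrier GG" using sig_car by blast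
lemma gr_car[simp]: "a \<in> carrier GG \<Longrightarrow> u \<in> carrier GG \<Longrightarrow> gract \<sigma> a u \<in> carrier GG" using sig_car by blast
lemma gl_one1[simp]: "a \<in> carrier GG \<Longrightarrow> glact \<sigma> a \<one>\<^bsub>GG\<^esub> = \<one>\<^bsub>GG\<^esub>" using sg_one by blast
lemma gl_one2[simp]: "a \<in> carrier GG \<Longrightarrow> glact \<sigma> \<one>\<^bsub>GG\<^esub> a = a" using sg_one by blast
lemma gl_mult: "a \<in> carrier GG \<Longrightarrow> b \<in> carrier GG \<Longrightarrow> u \<in> carrier GG \<Longrightarrow> glact \<sigma> (a \<otimes>\<^bsub>GG\<^esub> b) u = glact \<sigma> a (glact \<sigma> b u)"
  using sg_act by blast
lemma gl_prod: "a \<in> carrier GG \<Longrightarrow> u \<in> carrier GG \<Longrightarrow> v \<in> carrier GG \<Longrightarrow>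
   glact \<sigma> a (u \<otimes>\<^bsub>GG\<^esub> v) = glact \<sigma> a u \<otimes>\<^bsub>GG\<^esub> glact \<sigma> (gract \<sigma> a u) v"
  using sg_prod by blast
lemma decomp: "u \<in> carrier GG \<Longrightarrow> v \<in> carrier GG \<Longrightarrow> u \<otimes>\<^bsub>GG\<^esub> v = glact \<sigma> u v \<otimes>\<^bsub>GG\<^esub> gract \<sigma> u v"
  using sg_dec by blast
lemma gl_inv1: "a \<in> carrier GG \<Longrightarrow> u \<in> carrier GG \<Longrightarrow> glact \<sigma> (inv\<^bsub>GG\<^esub> a) (glact \<sigma> a u) = u"
  using gl_mult[of "inv\<^bsub>GG\<^esub> a" a u] by simp
lemma gl_inv2: "a \<in> carrier GG \<Longrightarrow> u \<in> carrier GG \<Longrightarrow> glact \<sigma> a (glact \<sigma> (inv\<^bsub>GG\<^esub> a) u) = u"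
  using gl_mult[of a "inv\<^bsub>GG\<^esub> a" u] by simp
lemma sig_eq: "\<sigma> (a,b) = (glact \<sigma> a b, gract \<sigma> a b)" by (simp add: glact_def gract_def)

lemma gen_car[simp]: "gen r x \<in> carrier GG" by (simp add: carrier_G gen_cls)
lemma inv_gen: "inv\<^bsub>GG\<^esub> (gen r x) = cls r [(x,False)]"
proof -
  have "cls r [(x,False)] \<otimes>\<^bsub>GG\<^esub> gen r x = \<one>\<^bsub>GG\<^esub>"
    unfolding gen_cls mult_G one_G cls_eq_iff
  proof -
    have "([]@[(x,False),(x,\<not>False)]@[], []) \<in> G_step r" unfolding G_step_def by blast
    then show "([(x,False)]@[(x,True)], []) \<in> G_eq r" unfolding G_eq_def by auto
  qed
  moreover have "cls r [(x,False)] \<in> carrier GG" by (simp add: carrier_G)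
  ultimately show ?thesis using grp.inv_equality[of "cls r [(x,False)]" "gen r x"] by simp
qed

lemma word_induct[consumes 1, case_names one gen ginv]:
  assumes "a \<in> carrier GG" "P \<one>\<^bsub>GG\<^esub>"
    "\<And>x a. a \<in> carrier GG \<Longrightarrow> P a \<Longrightarrow> P (gen r x \<otimes>\<^bsub>GG\<^esub> a)"
    "\<And>x a. a \<in> carrier GG \<Longrightarrow> P a \<Longrightarrow> P (inv\<^bsub>GG\<^esub> (gen r x) \<otimes>\<^bsub>GG\<^esub> a)"
  shows "P a"
proof -
  obtain w where a: "a = cls r w" using assms(1) by (auto simp: carrier_G)
  have "P (cls r w)"
  proof (induction w)
    case Nil then show ?case by (subst one_G[symmetric]) (rule assms(2))
  next
    case (Cons l w)
    obtain x b where l: "l = (x,b)" by fastforce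
    have c: "cls r w \<in> carrier GG" by (simp add: carrier_G)
    have e: "cls r (l#w) = cls r [l] \<otimes>\<^bsub>GG\<^esub> cls r w" by (simp add: mult_G)
    show ?case
    proof (cases b)
      case True
      have "P (gen r x \<otimes>\<^bsub>GG\<^esub> cls r w)" by (rule assms(3)[OF c Cons.IH])
      then show ?thesis using e l True by (simp add: gen_cls)
    next
      case False
      have "P (inv\<^bsub>GG\<^esub> (gen r x) \<otimes>\<^bsub>GG\<^esub> cls r w)" by (rule assms(4)[OF c Cons.IH])
      then show ?thesis using e l False by (simp add: inv_gen)
    qed
  qed
  then show ?thesis using a by simp
qed

lemma gen_inj: "gen r x = gen r y \<Longrightarrow> x = y"
proof -
  assume "gen r x = gen r y"
  then have "(map (\<lambda>x. (x, True)) [x], map (\<lambda>x. (x, True)) [y]) \<in> G_eq r" by (simp add: gen_cls cls_eq_iff)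
  then have "([x],[y]) \<in> S_eq r" using emb unfolding S_embeds_in_G_def by blast
  then show ?thesis using S_eq1 by fastforce
qed

lemma two_gen: "gen r p \<otimes>\<^bsub>GG\<^esub> gen r q = gen r x \<otimes>\<^bsub>GG\<^esub> gen r y \<Longrightarrow> (p,q) = (x,y) \<or> r (x,y) = (p,q)"
proof -
  assume "gen r p \<otimes>\<^bsub>GG\<^esub> gen r q = gen r x \<otimes>\<^bsub>GG\<^esub> gen r y"
  then have "(map (\<lambda>x. (x, True)) [x,y], map (\<lambda>x. (x, True)) [p,q]) \<in> G_eq r"
    by (simp add: gen_cls mult_G cls_eq_iff[symmetric])
  then have "([x,y],[p,q]) \<in> S_eq r" using emb unfolding S_embeds_in_G_def by blast
  moreover have "\<forall>p. r (r p) = p" using invol by blast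
  ultimately have "[p,q] = [x,y] \<or> [p,q] = rw r [x,y]" using S_eq2[of r x y "[p,q]"] by blast
  then show ?thesis by (auto simp: rw_def prod_eq_iff)
qed

lemma gl_gen: "glact \<sigma> (gen r y) (gen r x) = gen r (lact r y x)"
  using rG_ext by (simp add: glact_def lact_def)

lemma gl_invgen_gen: "glact \<sigma> (inv\<^bsub>GG\<^esub> (gen r y)) (gen r x) = gen r (inv_into UNIV (lact r y) x)"
proof -
  have "gen r x = glact \<sigma> (gen r y) (gen r (inv_into UNIV (lact r y) x))"
    using gl_gen lbij by (simp add: bij_is_surj surj_f_inv_f)
  then show ?thesis using gl_inv1 by simp
qed

lemma gl_any_gen: "a \<in> carrier GG \<Longrightarrow> \<exists>y. glact \<sigma> a (gen r x) = gen r y"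
proof (induction arbitrary: x rule: word_induct)
  case one then show ?case by auto
next
  case (gen z a)
  then obtain y where "glact \<sigma> a (gen r x) = gen r y" by blast
  then show ?case using gl_mult[of "gen r z" a "gen r x"] gl_gen gen by auto
next
  case (ginv z a)
  then obtain y where "glact \<sigma> a (gen r x) = gen r y" by blast
  then show ?case using gl_mult[of "inv\<^bsub>GG\<^esub> (gen r z)" a "gen r x"] gl_invgen_gen ginv by auto
qed

lemma gl_any_invgen: "a \<in> carrier GG \<Longrightarrow> \<exists>y. glact \<sigma> a (inv\<^bsub>GG\<^esub> (gen r x)) = inv\<^bsub>GG\<^esub> (gen r y)"
proof -
  assume a: "a \<in> carrier GG"
  obtain y where y: "glact \<sigma> (gract \<sigma> a (inv\<^bsub>GG\<^esub> (gen r x))) (gen r x) = gen r y"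
    using gl_any_gen a by (meson gen_car gr_car grp.inv_closed)
  have 1: "glact \<sigma> a (inv\<^bsub>GG\<^esub> (gen r x) \<otimes>\<^bsub>GG\<^esub> gen r x) = \<one>\<^bsub>GG\<^esub>" using a by simp
  have 2: "glact \<sigma> a (inv\<^bsub>GG\<^esub> (gen r x) \<otimes>\<^bsub>GG\<^esub> gen r x) = glact \<sigma> a (inv\<^bsub>GG\<^esub> (gen r x)) \<otimes>\<^bsub>GG\<^esub> gen r y"
    using gl_prod[OF a grp.inv_closed[OF gen_car] gen_car, of x x] by (simp only: y)
  from 1 2 have "glact \<sigma> a (inv\<^bsub>GG\<^esub> (gen r x)) \<otimes>\<^bsub>GG\<^esub> gen r y = \<one>\<^bsub>GG\<^esub>" by simp
  then have "glact \<sigma> a (inv\<^bsub>GG\<^esub> (gen r x)) = inv\<^bsub>GG\<^esub> (gen r y)"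
    using a grp.inv_equality[of "glact \<sigma> a (inv\<^bsub>GG\<^esub> (gen r x))" "gen r y"] by simp
  then show ?thesis by blast
qed

end



lemma cg_swap: assumes "comm_group A" "a \<in> carrier A" "b \<in> carrier A" "c \<in> carrier A" "d \<in> carrier A"
  shows "(a \<otimes>\<^bsub>A\<^esub> b) \<otimes>\<^bsub>A\<^esub> (c \<otimes>\<^bsub>A\<^esub> d) = (a \<otimes>\<^bsub>A\<^esub> c) \<otimes>\<^bsub>A\<^esub> (b \<otimes>\<^bsub>A\<^esub> d)"
proof -
  interpret comm_group A by fact
  show ?thesis using assms by (simp add: m_ac)
qed

context YB begin

lemma Ltriv_triv: assumes "\<forall>x y. lact r x y = y" shows "trivial_solution r"
  unfolding trivial_solution_def
proof (intro allI)
  fix x y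
  have 1: "r (x,y) = (y, ract r x y)" using assms r_split by simp
  have "r (y, ract r x y) = (x,y)" using invol[of "(x,y)"] 1 by simp
  then have "ract r x y = x" using assms r_split[of y "ract r x y"] by simp
  then show "r (x,y) = (y,x)" using 1 by simp
qed

lemma lact_sq_gen: "lact r z z = z \<Longrightarrow> glact \<sigma> (inv\<^bsub>GG\<^esub> (gen r z)) (gen r z) = gen r z"
proof -
  assume "lact r z z = z"
  then have "glact \<sigma> (gen r z) (gen r z) = gen r z" by (simp add: gl_gen)
  then show ?thesis using gl_inv1[of "gen r z" "gen r z"] by simp
qed

lemma P2_L: assumes A: "\<forall>a \<in> carrier GG. glact \<sigma> a a = a" shows "\<forall>x y. lact r y x = x"
proof (intro allI)
  fix x y
  have sq: "lact r z z = z" for z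
    using A[rule_format, of "gen r z"] gl_gen gen_inj by simp
  define a where "a = gen r x \<otimes>\<^bsub>GG\<^esub> gen r y"
  have ac: "a \<in> carrier GG" unfolding a_def by simp
  obtain q where q: "glact \<sigma> (gract \<sigma> a (gen r x)) (gen r y) = gen r q"
    using gl_any_gen[of "gract \<sigma> a (gen r x)" y] ac by auto
  have "glact \<sigma> a (gen r x) = gen r (lact r x (lact r y x))"
    unfolding a_def by (simp add: gl_mult gl_gen)
  then have "a = gen r (lact r x (lact r y x)) \<otimes>\<^bsub>GG\<^esub> gen r q"
    using A[rule_format, OF ac] gl_prod[OF ac, of "gen r x" "gen r y"] q unfolding a_def by simp
  then have "gen r (lact r x (lact r y x)) \<otimes>\<^bsub>GG\<^esub> gen r q = gen r x \<otimes>\<^bsub>GG\<^esub> gen r y" unfolding a_def by simp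
  then have "(lact r x (lact r y x), q) = (x,y) \<or> r (x,y) = (lact r x (lact r y x), q)" by (rule two_gen)
  then show "lact r y x = x"
  proof
    assume "(lact r x (lact r y x), q) = (x,y)"
    then have "lact r x (lact r y x) = lact r x x" using sq by simp
    then show ?thesis by (rule linj)
  next
    assume "r (x,y) = (lact r x (lact r y x), q)"
    then have "lact r x y = lact r x (lact r y x)" using r_split by simp
    then have "y = lact r y x" by (rule linj)
    then have "lact r y x = lact r y y" using sq by simp
    then have "x = y" by (rule linj)
    then show ?thesis using sq by simp
  qed
qed

lemma P1_L: assumes TS: "two_sided_brace GG (brace_add GG \<sigma>)" shows "\<forall>x y. lact r y x = x"
proof -
  define add where "add = brace_add GG \<sigma>"
  have add_eq: "add a b = a \<otimes>\<^bsub>GG\<^esub> glact \<sigma> (inv\<^bsub>GG\<^esub> a) b" for a b by (simp add: add_def brace_add_def)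
  have ts: "\<And>a b c. a \<in> carrier GG \<Longrightarrow> b \<in> carrier GG \<Longrightarrow> c \<in> carrier GG \<Longrightarrow>
      add (add a b \<otimes>\<^bsub>GG\<^esub> c) c = add (a \<otimes>\<^bsub>GG\<^esub> c) (b \<otimes>\<^bsub>GG\<^esub> c)"
    using TS unfolding two_sided_brace_def add_def by blast
  obtain z0 where CG: "comm_group \<lparr>carrier = carrier GG, monoid.mult = add, one = z0\<rparr>"
    using TS unfolding two_sided_brace_def left_brace_def add_def by blast
  have add1: "add \<one>\<^bsub>GG\<^esub> w = w" if "w \<in> carrier GG" for w using that by (simp add: add_eq)
  have addcar: "add a b \<in> carrier GG" if "a \<in> carrier GG" "b \<in> carrier GG" for a b using that by (simp add: add_eq)
  have sq: "lact r x x = x" for x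
  proof -
    obtain t where t: "glact \<sigma> (gen r x) (inv\<^bsub>GG\<^esub> (gen r x)) = inv\<^bsub>GG\<^esub> (gen r t)"
      using gl_any_invgen[of "gen r x" x] by auto
    define b where "b = inv\<^bsub>GG\<^esub> (gen r t)"
    define t' where "t' = inv_into UNIV (lact r t) t"
    have lt: "lact r t t' = t" unfolding t'_def using lbij by (simp add: bij_is_surj surj_f_inv_f)
    have bc: "b \<in> carrier GG" unfolding b_def by simp
    have "add (gen r x) b = \<one>\<^bsub>GG\<^esub>" unfolding add_eq b_def t[symmetric]
      by (simp add: gl_inv1)
    moreover have "b \<otimes>\<^bsub>GG\<^esub> gen r t = \<one>\<^bsub>GG\<^esub>" unfolding b_def by simp
    ultimately have "add (gen r t) (gen r t) = add (gen r x \<otimes>\<^bsub>GG\<^esub> gen r t) \<one>\<^bsub>GG\<^esub>"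
      using ts[OF gen_car bc gen_car, of x t] by simp
    then have "gen r t \<otimes>\<^bsub>GG\<^esub> gen r t' = gen r x \<otimes>\<^bsub>GG\<^esub> gen r t"
      by (simp add: add_eq gl_invgen_gen t'_def)
    then have "(t,t') = (x,t) \<or> r (x,t) = (t,t')" by (rule two_gen)
    then show ?thesis
    proof
      assume "(t,t') = (x,t)" then show ?thesis using lt by simp
    next
      assume h: "r (x,t) = (t,t')"
      then have "r (t,t') = (x,t)" using invol[of "(x,t)"] by simp
      then have "lact r t t' = x" using r_split by simp
      then have "x = t" using lt by simp
      then show ?thesis using h r_split by simp
    qed
  qed
  show ?thesis
  proof (intro allI)
    fix x z
    let ?g = "gen r x" and ?i = "inv\<^bsub>GG\<^esub> (gen r x)"
    have gi: "?i \<in> carrier GG" by simp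
    have zz: "glact \<sigma> (inv\<^bsub>GG\<^esub> (gen r z)) (gen r z) = gen r z" by (rule lact_sq_gen[OF sq])
    have xx: "glact \<sigma> ?i ?g = ?g" by (rule lact_sq_gen[OF sq])
    have "?i \<otimes>\<^bsub>GG\<^esub> ?g = ?g \<otimes>\<^bsub>GG\<^esub> gract \<sigma> ?i ?g" using decomp[OF gi gen_car, of x] xx by simp
    then have "?g \<otimes>\<^bsub>GG\<^esub> ?i = ?g \<otimes>\<^bsub>GG\<^esub> gract \<sigma> ?i ?g" by simp
    then have gr: "gract \<sigma> ?i ?g = ?i" using grp.Units_l_cancel[of ?g ?i "gract \<sigma> ?i ?g"] grp.Units_eq by simp
    have p1: "glact \<sigma> ?i (?g \<otimes>\<^bsub>GG\<^esub> ?i) = \<one>\<^bsub>GG\<^esub>" by simp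
    have p2: "glact \<sigma> ?i (?g \<otimes>\<^bsub>GG\<^esub> ?i) = ?g \<otimes>\<^bsub>GG\<^esub> glact \<sigma> ?i ?i"
      using gl_prod[OF gi gen_car gi, of x] by (simp only: xx gr)
    from p1 p2 have "?g \<otimes>\<^bsub>GG\<^esub> ?i = ?g \<otimes>\<^bsub>GG\<^esub> glact \<sigma> ?i ?i" by simp
    then have ii: "glact \<sigma> ?i ?i = ?i" using grp.Units_l_cancel[of ?g ?i "glact \<sigma> ?i ?i"] grp.Units_eq by simp
    have a1: "add ?g ?i = \<one>\<^bsub>GG\<^esub>" by (simp add: add_eq ii)
    obtain v' where v': "glact \<sigma> ?i (gen r z) = gen r v'" using gl_any_gen[OF gi] by blast
    define u' where "u' = lact r x z"
    obtain w' where w': "glact \<sigma> (inv\<^bsub>GG\<^esub> (gen r u')) (gen r v') = gen r w'"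
      using gl_any_gen[of "inv\<^bsub>GG\<^esub> (gen r u')"] by auto
    have u: "glact \<sigma> ?g (gen r z) = gen r u'" by (simp add: gl_gen u'_def)
    have e1: "add ?g (gen r u') = ?g \<otimes>\<^bsub>GG\<^esub> gen r z" unfolding add_eq u[symmetric] by (simp add: gl_inv1)
    have e2: "add ?i (gen r v') = ?i \<otimes>\<^bsub>GG\<^esub> gen r z" unfolding add_eq v'[symmetric] by (simp add: gl_inv2)
    have "add (gen r z) (gen r z) = add (?g \<otimes>\<^bsub>GG\<^esub> gen r z) (?i \<otimes>\<^bsub>GG\<^esub> gen r z)"
      using ts[OF gen_car gi gen_car, of x z] a1 by simp
    also have "\<dots> = add (add ?g (gen r u')) (add ?i (gen r v'))" using e1 e2 by simp
    also have "\<dots> = add (add ?g ?i) (add (gen r u') (gen r v'))"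
      using cg_swap[OF CG, of ?g "gen r u'" ?i "gen r v'"] by simp
    also have "\<dots> = add (gen r u') (gen r v')" using a1 add1 addcar by simp
    finally have "gen r u' \<otimes>\<^bsub>GG\<^esub> gen r w' = gen r z \<otimes>\<^bsub>GG\<^esub> gen r z"
      using zz w' by (simp add: add_eq)
    then have "(u',w') = (z,z) \<or> r (z,z) = (u',w')" by (rule two_gen)
    then have "u' = z" using r_split sq by auto
    then show "lact r x z = z" by (simp add: u'_def)
  qed
qed

end



lemma (in group) comm_inv: "x \<in> carrier G \<Longrightarrow> y \<in> carrier G \<Longrightarrow> x \<otimes> y = y \<otimes> x \<Longrightarrow> inv x \<otimes> y = y \<otimes> inv x"
proof -
  assume x: "x \<in> carrier G" and y: "y \<in> carrier G" and c: "x \<otimes> y = y \<otimes> x"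
  have "inv x \<otimes> y = inv x \<otimes> (y \<otimes> x) \<otimes> inv x" using x y by (simp add: m_assoc)
  also have "\<dots> = inv x \<otimes> (x \<otimes> y) \<otimes> inv x" using c by simp
  also have "\<dots> = y \<otimes> inv x" using x y by (simp add: m_assoc[symmetric])
  finally show ?thesis .
qed

context YB begin

lemma gen_comm: assumes T: "trivial_solution r" shows "gen r x \<otimes>\<^bsub>GG\<^esub> gen r y = gen r y \<otimes>\<^bsub>GG\<^esub> gen r x"
proof -
  have "([]@[(x,True),(y,True)]@[], []@[(fst (r (x,y)),True),(snd (r (x,y)),True)]@[]) \<in> G_step r"
    unfolding G_step_def by blast
  then have "([(x,True),(y,True)], [(y,True),(x,True)]) \<in> G_eq r"
    using T unfolding trivial_solution_def G_eq_def by auto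
  then show ?thesis by (simp add: gen_cls mult_G cls_eq_iff)
qed

lemma gen_comm_all: assumes T: "trivial_solution r" and b: "b \<in> carrier GG"
  shows "gen r x \<otimes>\<^bsub>GG\<^esub> b = b \<otimes>\<^bsub>GG\<^esub> gen r x"
  using b
proof (induction rule: word_induct)
  case one then show ?case by simp
next
  case (gen y b)
  have "gen r x \<otimes>\<^bsub>GG\<^esub> (gen r y \<otimes>\<^bsub>GG\<^esub> b) = (gen r x \<otimes>\<^bsub>GG\<^esub> gen r y) \<otimes>\<^bsub>GG\<^esub> b" using gen by (simp add: grp.m_assoc)
  also have "\<dots> = (gen r y \<otimes>\<^bsub>GG\<^esub> gen r x) \<otimes>\<^bsub>GG\<^esub> b" using gen_comm[OF T, of x y] by simp
  also have "\<dots> = gen r y \<otimes>\<^bsub>GG\<^esub> (gen r x \<otimes>\<^bsub>GG\<^esub> b)" using gen by (simp add: grp.m_assoc)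
  also have "\<dots> = gen r y \<otimes>\<^bsub>GG\<^esub> (b \<otimes>\<^bsub>GG\<^esub> gen r x)" using gen by simp
  also have "\<dots> = (gen r y \<otimes>\<^bsub>GG\<^esub> b) \<otimes>\<^bsub>GG\<^esub> gen r x" using gen by (simp add: grp.m_assoc)
  finally show ?case .
next
  case (ginv y b)
  have c: "gen r x \<otimes>\<^bsub>GG\<^esub> inv\<^bsub>GG\<^esub> (gen r y) = inv\<^bsub>GG\<^esub> (gen r y) \<otimes>\<^bsub>GG\<^esub> gen r x"
    using grp.comm_inv[OF gen_car gen_car gen_comm[OF T, of y x]] by simp
  have "gen r x \<otimes>\<^bsub>GG\<^esub> (inv\<^bsub>GG\<^esub> (gen r y) \<otimes>\<^bsub>GG\<^esub> b) = (gen r x \<otimes>\<^bsub>GG\<^esub> inv\<^bsub>GG\<^esub> (gen r y)) \<otimes>\<^bsub>GG\<^esub> b" using ginv by (simp add: grp.m_assoc)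
  also have "\<dots> = (inv\<^bsub>GG\<^esub> (gen r y) \<otimes>\<^bsub>GG\<^esub> gen r x) \<otimes>\<^bsub>GG\<^esub> b" using c by simp
  also have "\<dots> = inv\<^bsub>GG\<^esub> (gen r y) \<otimes>\<^bsub>GG\<^esub> (gen r x \<otimes>\<^bsub>GG\<^esub> b)" using ginv by (simp add: grp.m_assoc)
  also have "\<dots> = inv\<^bsub>GG\<^esub> (gen r y) \<otimes>\<^bsub>GG\<^esub> (b \<otimes>\<^bsub>GG\<^esub> gen r x)" using ginv by simp
  also have "\<dots> = (inv\<^bsub>GG\<^esub> (gen r y) \<otimes>\<^bsub>GG\<^esub> b) \<otimes>\<^bsub>GG\<^esub> gen r x" using ginv by (simp add: grp.m_assoc)
  finally show ?case .
qed

lemma abel: assumes T: "trivial_solution r" and a: "a \<in> carrier GG"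
  shows "\<forall>b \<in> carrier GG. a \<otimes>\<^bsub>GG\<^esub> b = b \<otimes>\<^bsub>GG\<^esub> a"
  using a
proof (induction rule: word_induct)
  case one then show ?case by simp
next
  case (gen y a)
  show ?case
  proof
    fix b assume b: "b \<in> carrier GG"
    have "(gen r y \<otimes>\<^bsub>GG\<^esub> a) \<otimes>\<^bsub>GG\<^esub> b = gen r y \<otimes>\<^bsub>GG\<^esub> (b \<otimes>\<^bsub>GG\<^esub> a)" using gen b by (simp add: grp.m_assoc)
    also have "\<dots> = (gen r y \<otimes>\<^bsub>GG\<^esub> b) \<otimes>\<^bsub>GG\<^esub> a" using gen b by (simp add: grp.m_assoc)
    also have "\<dots> = (b \<otimes>\<^bsub>GG\<^esub> gen r y) \<otimes>\<^bsub>GG\<^esub> a" using gen_comm_all[OF T b, of y] by simp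
    also have "\<dots> = b \<otimes>\<^bsub>GG\<^esub> (gen r y \<otimes>\<^bsub>GG\<^esub> a)" using gen b by (simp add: grp.m_assoc)
    finally show "(gen r y \<otimes>\<^bsub>GG\<^esub> a) \<otimes>\<^bsub>GG\<^esub> b = b \<otimes>\<^bsub>GG\<^esub> (gen r y \<otimes>\<^bsub>GG\<^esub> a)" .
  qed
next
  case (ginv y a)
  show ?case
  proof
    fix b assume b: "b \<in> carrier GG"
    have c: "inv\<^bsub>GG\<^esub> (gen r y) \<otimes>\<^bsub>GG\<^esub> b = b \<otimes>\<^bsub>GG\<^esub> inv\<^bsub>GG\<^esub> (gen r y)"
      using grp.comm_inv[OF gen_car b gen_comm_all[OF T b, of y]] .
    have "(inv\<^bsub>GG\<^esub> (gen r y) \<otimes>\<^bsub>GG\<^esub> a) \<otimes>\<^bsub>GG\<^esub> b = inv\<^bsub>GG\<^esub> (gen r y) \<otimes>\<^bsub>GG\<^esub> (b \<otimes>\<^bsub>GG\<^esub> a)" using ginv b by (simp add: grp.m_assoc)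
    also have "\<dots> = (inv\<^bsub>GG\<^esub> (gen r y) \<otimes>\<^bsub>GG\<^esub> b) \<otimes>\<^bsub>GG\<^esub> a" using ginv b by (simp add: grp.m_assoc)
    also have "\<dots> = (b \<otimes>\<^bsub>GG\<^esub> inv\<^bsub>GG\<^esub> (gen r y)) \<otimes>\<^bsub>GG\<^esub> a" using c by simp
    also have "\<dots> = b \<otimes>\<^bsub>GG\<^esub> (inv\<^bsub>GG\<^esub> (gen r y) \<otimes>\<^bsub>GG\<^esub> a)" using ginv b by (simp add: grp.m_assoc)
    finally show "(inv\<^bsub>GG\<^esub> (gen r y) \<otimes>\<^bsub>GG\<^esub> a) \<otimes>\<^bsub>GG\<^esub> b = b \<otimes>\<^bsub>GG\<^esub> (inv\<^bsub>GG\<^esub> (gen r y) \<otimes>\<^bsub>GG\<^esub> a)" .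
  qed
qed

lemma gl_gen_triv: assumes T: "trivial_solution r" and a: "a \<in> carrier GG"
  shows "glact \<sigma> a (gen r x) = gen r x"
  using a
proof (induction rule: word_induct)
  case one then show ?case by simp
next
  case (gen y a)
  have "lact r y x = x" using T by (simp add: trivial_solution_def lact_def)
  then show ?case using gen gl_mult[of "gen r y" a "gen r x"] by (simp add: gl_gen)
next
  case (ginv y a)
  have "lact r y x = x" using T by (simp add: trivial_solution_def lact_def)
  then have "glact \<sigma> (gen r y) (gen r x) = gen r x" by (simp add: gl_gen)
  then have "glact \<sigma> (inv\<^bsub>GG\<^esub> (gen r y)) (gen r x) = gen r x" using gl_inv1[of "gen r y" "gen r x"] by simp
  then show ?case using ginv gl_mult[of "inv\<^bsub>GG\<^esub> (gen r y)" a "gen r x"] by simp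
qed

lemma gl_invgen_triv: assumes T: "trivial_solution r" and a: "a \<in> carrier GG"
  shows "glact \<sigma> a (inv\<^bsub>GG\<^esub> (gen r x)) = inv\<^bsub>GG\<^esub> (gen r x)"
proof -
  have 1: "glact \<sigma> a (inv\<^bsub>GG\<^esub> (gen r x) \<otimes>\<^bsub>GG\<^esub> gen r x) = \<one>\<^bsub>GG\<^esub>" using a by simp
  have 2: "glact \<sigma> a (inv\<^bsub>GG\<^esub> (gen r x) \<otimes>\<^bsub>GG\<^esub> gen r x) = glact \<sigma> a (inv\<^bsub>GG\<^esub> (gen r x)) \<otimes>\<^bsub>GG\<^esub> gen r x"
    using gl_prod[OF a grp.inv_closed[OF gen_car] gen_car, of x x]
    by (simp only: gl_gen_triv[OF T gr_car[OF a grp.inv_closed[OF gen_car]]])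
  from 1 2 show ?thesis using a grp.inv_equality[of "glact \<sigma> a (inv\<^bsub>GG\<^esub> (gen r x))" "gen r x"] by simp
qed

lemma gl_triv: assumes T: "trivial_solution r" and b: "b \<in> carrier GG"
  shows "\<forall>a \<in> carrier GG. glact \<sigma> a b = b"
  using b
proof (induction rule: word_induct)
  case one then show ?case by simp
next
  case (gen y b)
  show ?case using gen gl_prod[of _ "gen r y" b] gl_gen_triv[OF T] by simp
next
  case (ginv y b)
  show ?case using ginv gl_prod[of _ "inv\<^bsub>GG\<^esub> (gen r y)" b] gl_invgen_triv[OF T] by simp
qed

lemma flip: assumes T: "trivial_solution r" and a: "a \<in> carrier GG" and b: "b \<in> carrier GG"
  shows "\<sigma> (a,b) = (b,a)"
proof -
  have g: "glact \<sigma> a b = b" using gl_triv[OF T b] a by blast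
  have "b \<otimes>\<^bsub>GG\<^esub> a = b \<otimes>\<^bsub>GG\<^esub> gract \<sigma> a b" using decomp[OF a b] g abel[OF T a] b by simp
  then have "gract \<sigma> a b = a" using grp.Units_l_cancel[of b a "gract \<sigma> a b"] grp.Units_eq a b by simp
  then show ?thesis using g sig_eq by simp
qed

end



definition wv :: "('a \<times> bool) list \<Rightarrow> 'a \<Rightarrow>\<^sub>0 int" where
  "wv w = sum_list (map (\<lambda>(x,b). if b then frag_of x else - frag_of x) w)"

lemma wv_app[simp]: "wv (u@v) = wv u + wv v" by (simp add: wv_def)
lemma wv_Cons[simp]: "wv (l#v) = wv [l] + wv v" by (simp add: wv_def)

lemma wv_step: "trivial_solution r \<Longrightarrow> (u,v) \<in> G_step r \<Longrightarrow> wv u = wv v"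
  unfolding G_step_def trivial_solution_def by (auto simp: wv_def)

lemma wv_eq: assumes T: "trivial_solution r" shows "(u,v) \<in> G_eq r \<Longrightarrow> wv u = wv v"
  unfolding G_eq_def
proof (induction rule: rtrancl_induct)
  case (step y z) then show ?case using wv_step[OF T, of y z] wv_step[OF T, of z y] by auto
qed simp

context YB begin

lemma brace_triv: assumes T: "trivial_solution r" shows "two_sided_brace GG (brace_add GG \<sigma>)"
proof -
  have cg: "comm_group GG" by (rule grp.group_comm_groupI) (use abel[OF T] in auto)
  interpret cg: comm_group GG by (rule cg)
  have ce: "brace_add GG \<sigma> a b = a \<otimes>\<^bsub>GG\<^esub> b" if "a \<in> carrier GG" "b \<in> carrier GG" for a b
    using that gl_triv[OF T] by (simp add: brace_add_def)
  have "comm_group \<lparr>carrier = carrier GG, monoid.mult = brace_add GG \<sigma>, one = \<one>\<^bsub>GG\<^esub>\<rparr>"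
  proof (rule comm_groupI, goal_cases)
    case (6 x) then show ?case by (intro bexI[of _ "inv\<^bsub>GG\<^esub> x"]) (auto simp: ce)
  qed (auto simp: ce cg.m_ac)
  then show ?thesis
    unfolding two_sided_brace_def left_brace_def
    by (auto simp: ce cg.m_ac grp.is_group)
qed

lemma iso_triv: assumes T: "trivial_solution r"
  shows "\<exists>h. h \<in> iso GG (free_Abelian_group (UNIV :: 'a set)) \<and> (\<forall>x. h (gen r x) = frag_of x)"
proof -
  have cg: "comm_group GG" by (rule grp.group_comm_groupI) (use abel[OF T] in auto)
  interpret cg: comm_group GG by (rule cg)
  let ?F = "free_Abelian_group (UNIV :: 'a set)"
  define h :: "('a \<times> bool) list set \<Rightarrow> 'a \<Rightarrow>\<^sub>0 int" where "h A = wv (SOME w. w \<in> A)" for A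
  have hc: "h (cls r w) = wv w" for w
  proof -
    have m: "w \<in> cls r w" by (simp add: G_eq_def)
    have "(SOME u. u \<in> cls r w) \<in> cls r w" by (rule someI, rule m)
    then have "(w, SOME u. u \<in> cls r w) \<in> G_eq r" by simp
    then show ?thesis unfolding h_def using wv_eq[OF T] by simp
  qed
  have hg: "h (gen r x) = frag_of x" for x by (simp add: gen_cls hc wv_def)
  have hhom: "h \<in> hom GG ?F"
  proof (rule homI)
    fix a b assume "a \<in> carrier GG" "b \<in> carrier GG"
    then obtain u v where "a = cls r u" "b = cls r v" by (auto simp: carrier_G)
    then show "h (a \<otimes>\<^bsub>GG\<^esub> b) = h a \<otimes>\<^bsub>?F\<^esub> h b" by (simp add: mult_G hc)
  qed simp
  interpret hh: group_hom GG ?F h by (simp add: group_hom_def group_hom_axioms_def hhom grp.is_group)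
  obtain k where khom: "k \<in> hom ?F GG" and kf: "\<And>x. x \<in> UNIV \<Longrightarrow> k (frag_of x) = gen r x"
    using cg.free_Abelian_group_universal[of "gen r" UNIV] by (metis gen_car image_subsetI)
  interpret kh: group_hom ?F GG k by (simp add: group_hom_def group_hom_axioms_def khom grp.is_group)
  have hinv: "h (inv\<^bsub>GG\<^esub> (gen r x)) = - frag_of x" for x by (simp add: hg)
  have kh: "k (h a) = a" if "a \<in> carrier GG" for a
    using that
  proof (induction rule: word_induct)
    case one then show ?case using kh.hom_one by simp
  next
    case (gen x a)
    then show ?case using kh.hom_mult[of "frag_of x" "h a"] by (simp add: hg kf)
  next
    case (ginv x a)
    have "k (- frag_of x) = inv\<^bsub>GG\<^esub> (gen r x)"
      using kh.hom_inv[of "frag_of x"] by (simp add: kf)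
    then show ?case using ginv kh.hom_mult[of "- frag_of x" "h a"] by (simp add: hinv)
  qed
  have hk: "h (k y) = y" for y
  proof (rule free_Abelian_group_induct[of y UNIV])
    show "h (k 0) = 0" using kh.hom_one hh.hom_one by simp
  next
    fix a b :: "'a \<Rightarrow>\<^sub>0 int"
    assume "h (k a) = a" "h (k b) = b"
    moreover have "a - b = a \<otimes>\<^bsub>?F\<^esub> inv\<^bsub>?F\<^esub> b" by simp
    ultimately show "h (k (a - b)) = a - b"
      by (simp del: mult_free_Abelian_group inv_free_Abelian_group)
  next
    fix a :: 'a show "h (k (frag_of a)) = frag_of a" by (simp add: kf hg)
  qed simp
  have "bij_betw h (carrier GG) (carrier ?F)"
    by (rule bij_betw_byWitness[where f'=k]) (auto simp: kh hk)
  then have "h \<in> iso GG ?F" using hhom by (simp add: iso_def)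
  then show ?thesis using hg by blast
qed

end


theorem mainTheorem11:
  fixes r :: "'a \<times> 'a \<Rightarrow> 'a \<times> 'a"
    and \<sigma> :: "('a \<times> bool) list set \<times> ('a \<times> bool) list set \<Rightarrow> ('a \<times> bool) list set \<times> ('a \<times> bool) list set"
  assumes symm: "symmetric_set r"
    and emb: "S_embeds_in_G r"
    and rG: "symmetric_group (YB_group r) \<sigma>"
    and rG_ext: "\<forall>x y. \<sigma> (gen r x, gen r y) = (gen r (fst (r (x, y))), gen r (snd (r (x, y))))"
  defines "G \<equiv> YB_group r"
  shows
    "(two_sided_brace G (brace_add G \<sigma>)
        \<longleftrightarrow> (\<forall>a \<in> carrier G. glact \<sigma> a a = a))
   \<and> ((\<forall>a \<in> carrier G. glact \<sigma> a a = a)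
        \<longleftrightarrow> (square_free r \<and>
             (\<forall>x \<in> carrier G. \<forall>y \<in> carrier G.
                glact \<sigma> (x \<otimes>\<^bsub>G\<^esub> y) (x \<otimes>\<^bsub>G\<^esub> y) = x \<otimes>\<^bsub>G\<^esub> y)))
   \<and> ((square_free r \<and>
             (\<forall>x \<in> carrier G. \<forall>y \<in> carrier G.
                glact \<sigma> (x \<otimes>\<^bsub>G\<^esub> y) (x \<otimes>\<^bsub>G\<^esub> y) = x \<otimes>\<^bsub>G\<^esub> y))
        \<longleftrightarrow> ((\<exists>h. h \<in> iso G (free_Abelian_group (UNIV :: 'a set)) \<and>
                   (\<forall>x. h (gen r x) = frag_of x)) \<and>
             (\<forall>a \<in> carrier G. \<forall>b \<in> carrier G. \<sigma> (a, b) = (b, a))))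
   \<and> (((\<exists>h. h \<in> iso G (free_Abelian_group (UNIV :: 'a set)) \<and>
                   (\<forall>x. h (gen r x) = frag_of x)) \<and>
             (\<forall>a \<in> carrier G. \<forall>b \<in> carrier G. \<sigma> (a, b) = (b, a)))
        \<longleftrightarrow> trivial_solution r)"
proof -
  interpret YB r \<sigma> using symm emb rG rG_ext by (unfold_locales)
  have A1: "two_sided_brace G (brace_add G \<sigma>) \<longleftrightarrow> trivial_solution r"
    unfolding G_def using P1_L Ltriv_triv brace_triv by blast
  have A2: "(\<forall>a \<in> carrier G. glact \<sigma> a a = a) \<longleftrightarrow> trivial_solution r"
    unfolding G_def using P2_L Ltriv_triv gl_triv by blast
  have A3: "(square_free r \<and> (\<forall>x \<in> carrier G. \<forall>y \<in> carrier G.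
                glact \<sigma> (x \<otimes>\<^bsub>G\<^esub> y) (x \<otimes>\<^bsub>G\<^esub> y) = x \<otimes>\<^bsub>G\<^esub> y)) \<longleftrightarrow> trivial_solution r"
  proof
    assume "square_free r \<and> (\<forall>x \<in> carrier G. \<forall>y \<in> carrier G.
                glact \<sigma> (x \<otimes>\<^bsub>G\<^esub> y) (x \<otimes>\<^bsub>G\<^esub> y) = x \<otimes>\<^bsub>G\<^esub> y)"
    then have "\<forall>a \<in> carrier G. glact \<sigma> a a = a" unfolding G_def
      by (metis grp.one_closed grp.r_one)
    then show "trivial_solution r" using A2 by blast
  next
    assume T: "trivial_solution r"
    then have "square_free r" by (simp add: trivial_solution_def square_free_def)
    then show "square_free r \<and> (\<forall>x \<in> carrier G. \<forall>y \<in> carrier G.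
                glact \<sigma> (x \<otimes>\<^bsub>G\<^esub> y) (x \<otimes>\<^bsub>G\<^esub> y) = x \<otimes>\<^bsub>G\<^esub> y)"
      unfolding G_def using gl_triv[OF T] by simp
  qed
  have A4: "((\<exists>h. h \<in> iso G (free_Abelian_group (UNIV :: 'a set)) \<and>
                   (\<forall>x. h (gen r x) = frag_of x)) \<and>
             (\<forall>a \<in> carrier G. \<forall>b \<in> carrier G. \<sigma> (a, b) = (b, a))) \<longleftrightarrow> trivial_solution r"
  proof
    assume "(\<exists>h. h \<in> iso G (free_Abelian_group (UNIV :: 'a set)) \<and>
                   (\<forall>x. h (gen r x) = frag_of x)) \<and>
             (\<forall>a \<in> carrier G. \<forall>b \<in> carrier G. \<sigma> (a, b) = (b, a))"
    then have F: "\<forall>a \<in> carrier G. \<forall>b \<in> carrier G. \<sigma> (a, b) = (b, a)" by blast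
    show "trivial_solution r" unfolding trivial_solution_def
    proof (intro allI)
      fix x y
      have "(gen r y, gen r x) = (gen r (fst (r (x, y))), gen r (snd (r (x, y))))"
        using F rG_ext unfolding G_def by (metis gen_car)
      then have "y = fst (r (x,y))" "x = snd (r (x,y))" using gen_inj by auto
      then show "r (x,y) = (y,x)" by (metis prod.collapse)
    qed
  next
    assume T: "trivial_solution r"
    show "(\<exists>h. h \<in> iso G (free_Abelian_group (UNIV :: 'a set)) \<and>
                   (\<forall>x. h (gen r x) = frag_of x)) \<and>
             (\<forall>a \<in> carrier G. \<forall>b \<in> carrier G. \<sigma> (a, b) = (b, a))"
      unfolding G_def using iso_triv[OF T] flip[OF T] by blast
  qed
  show ?thesis using A1 A2 A3 A4 by blast
qed

end
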